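(* Let $(E,P,\vartheta)$ be a bipolar metric space and let $F\colon E\cup P\to E\cup P$ with $F(E)\subseteq E$, $F(P)\subseteq P$ be a polynomial contraction, i.e. there exist $\pi\in(0,1)$, an integer $\sigma\geq1$ and functions $q_\upsilon\colon E\times P\to[0,\infty)$, $\upsilon=0,\dots,\sigma$, such that $$\sum_{\upsilon=0}^{\sigma} q_\upsilon(Fe,Ff)\,\vartheta^\upsilon(Fe,Ff)\leq \pi\sum_{\upsilon=0}^{\sigma} q_\upsilon(e,f)\,\vartheta^\upsilon(e,f)\quad\text{for all } e\in E,\ f\in P.$$ Assume (i) $q_0(e,f)=0$ for all $e\in E$, $f\in P$; (ii) for every $\upsilon\in\{1,\dots,\sigma\}$ there is $W_\upsilon>0$ with $q_\upsilon(e,f)\leq W_\upsilon$ for all $e\in E$, $f\in P$; (iii) there exist $\varrho\in\{1,\dots,\sigma\}$ and $Q_\varrho>0$ with $q_\varrho(e,f)\geq Q_\varrho$ for all $e\in E$, $f\in P$. Then $F$ is continuous.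
   Context: A bipolar metric space is a triple $(E,P,\vartheta)$ where $E,P$ are nonempty sets and $\vartheta\colon E\times P\to[0,\infty)$ satisfies: (1) for $e\in E$, $f\in P$, $\vartheta(e,f)=0$ iff $e=f$; (2) $\vartheta(e,f)=\vartheta(f,e)$ whenever $e,f\in E\cap P$; (3) $\vartheta(e,f)\leq\vartheta(e,z)+\vartheta(r,z)+\vartheta(r,f)$ for all $e,r\in E$, $z,f\in P$. A sequence $(x_n)$ in $E$ converges to $y\in P$ if $\vartheta(x_n,y)\to0$; a sequence $(y_n)$ in $P$ converges to $x\in E$ if $\vartheta(x,y_n)\to0$. $F$ is continuous if whenever a sequence $(u_n)$ (in $E$ or in $P$) converges to a point $v$, the sequence $(Fu_n)$ converges to $Fv$. $\vartheta^\upsilon$ denotes the $\upsilon$-th power of $\vartheta$, with $\vartheta^0\equiv1$. *)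

theory Defs
  imports Complex_Main
begin

definition bipolar_metric :: "'a set \<Rightarrow> 'a set \<Rightarrow> ('a \<Rightarrow> 'a \<Rightarrow> real) \<Rightarrow> bool" where
  "bipolar_metric E P d \<longleftrightarrow>
     E \<noteq> {} \<and> P \<noteq> {} \<and>
     (\<forall>e\<in>E. \<forall>f\<in>P. d e f \<ge> 0) \<and>
     (\<forall>e\<in>E. \<forall>f\<in>P. d e f = 0 \<longleftrightarrow> e = f) \<and>
     (\<forall>e\<in>E \<inter> P. \<forall>f\<in>E \<inter> P. d e f = d f e) \<and>
     (\<forall>e\<in>E. \<forall>r\<in>E. \<forall>z\<in>P. \<forall>f\<in>P. d e f \<le> d e z + d r z + d r f)"

definition bipolar_continuous :: "'a set \<Rightarrow> 'a set \<Rightarrow> ('a \<Rightarrow> 'a \<Rightarrow> real) \<Rightarrow> ('a \<Rightarrow> 'a) \<Rightarrow> bool" where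
  "bipolar_continuous E P d F \<longleftrightarrow>
     (\<forall>u v. (\<forall>n. u n \<in> E) \<and> v \<in> P \<and> (\<lambda>n. d (u n) v) \<longlonglongrightarrow> 0
        \<longrightarrow> (\<lambda>n. d (F (u n)) (F v)) \<longlonglongrightarrow> 0) \<and>
     (\<forall>u v. (\<forall>n. u n \<in> P) \<and> v \<in> E \<and> (\<lambda>n. d v (u n)) \<longlonglongrightarrow> 0
        \<longrightarrow> (\<lambda>n. d (F v) (F (u n))) \<longlonglongrightarrow> 0)"

end

theory Submission
  imports Defs
begin

lemma aux_lim:
  fixes g t :: "nat \<Rightarrow> real"
  assumes g0: "\<And>n. 0 \<le> g n"
    and le: "\<And>n. Q * g n ^ r \<le> c * (\<Sum>u=0..s. W u * t n ^ u)"
    and W0: "W 0 = 0"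
    and t: "t \<longlonglongrightarrow> 0" and Q: "Q > 0" and r: "r \<ge> 1"
  shows "g \<longlonglongrightarrow> 0"
proof -
  have h: "(\<lambda>n. c / Q * (\<Sum>u=0..s. W u * t n ^ u)) \<longlonglongrightarrow> c / Q * (\<Sum>u=0..s. W u * 0 ^ u)"
    by (intro tendsto_intros t)
  have "(\<Sum>u=0..s. W u * (0::real) ^ u) = 0"
    by (rule sum.neutral) (auto simp: W0)
  with h have h2: "(\<lambda>n. c / Q * (\<Sum>u=0..s. W u * t n ^ u)) \<longlonglongrightarrow> 0" by simp
  have up: "g n ^ r \<le> c / Q * (\<Sum>u=0..s. W u * t n ^ u)" for n
    using le[of n] Q by (simp add: field_simps)
  have gr: "(\<lambda>n. g n ^ r) \<longlonglongrightarrow> 0"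
    by (rule tendsto_sandwich[OF _ _ tendsto_const h2]) (use up g0 in \<open>auto intro: always_eventually\<close>)
  have "(\<lambda>n. root r (g n ^ r)) \<longlonglongrightarrow> root r 0"
    by (rule tendsto_real_root[OF gr])
  moreover have "root r (g n ^ r) = g n" for n
    using g0[of n] r by (simp add: real_root_power_cancel)
  ultimately show ?thesis by simp
qed

theorem proposition3p4:
  fixes E P :: "'a set" and d :: "'a \<Rightarrow> 'a \<Rightarrow> real" and F :: "'a \<Rightarrow> 'a"
    and q :: "nat \<Rightarrow> 'a \<Rightarrow> 'a \<Rightarrow> real" and \<pi> :: real and \<sigma> :: nat
  assumes bp: "bipolar_metric E P d"
    and FE: "F ` E \<subseteq> E" and FP: "F ` P \<subseteq> P"
    and pi: "0 < \<pi>" "\<pi> < 1"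
    and sigma: "\<sigma> \<ge> 1"
    and qnn: "\<And>u e f. u \<le> \<sigma> \<Longrightarrow> e \<in> E \<Longrightarrow> f \<in> P \<Longrightarrow> q u e f \<ge> 0"
    and contr: "\<And>e f. e \<in> E \<Longrightarrow> f \<in> P \<Longrightarrow>
      (\<Sum>u=0..\<sigma>. q u (F e) (F f) * d (F e) (F f) ^ u)
        \<le> \<pi> * (\<Sum>u=0..\<sigma>. q u e f * d e f ^ u)"
    and q0: "\<And>e f. e \<in> E \<Longrightarrow> f \<in> P \<Longrightarrow> q 0 e f = 0"
    and qbd: "\<And>u. u \<in> {1..\<sigma>} \<Longrightarrow> \<exists>W > 0. \<forall>e\<in>E. \<forall>f\<in>P. q u e f \<le> W"
    and qlow: "\<exists>\<rho>\<in>{1..\<sigma>}. \<exists>Q > 0. \<forall>e\<in>E. \<forall>f\<in>P. q \<rho> e f \<ge> Q"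
  shows "bipolar_continuous E P d F"
proof -
  obtain \<rho> Q where rho: "\<rho> \<in> {1..\<sigma>}" and Q: "Q > 0" and Ql: "\<forall>e\<in>E. \<forall>f\<in>P. q \<rho> e f \<ge> Q"
    using qlow by blast
  define W where "W u = (if u \<in> {1..\<sigma>} then (SOME W. W > 0 \<and> (\<forall>e\<in>E. \<forall>f\<in>P. q u e f \<le> W)) else 0)" for u
  have W0: "W 0 = 0" by (simp add: W_def)
  have qW: "q u e f \<le> W u" if "u \<le> \<sigma>" "e \<in> E" "f \<in> P" for u e f
  proof (cases "u \<in> {1..\<sigma>}")
    case True
    from someI_ex[OF qbd[OF True]] show ?thesis using True that by (auto simp: W_def)
  next
    case False
    then have "u = 0" using that by auto
    then show ?thesis using q0 that W0 by simp
  qed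
  have dnn: "\<And>e f. e \<in> E \<Longrightarrow> f \<in> P \<Longrightarrow> 0 \<le> d e f" using bp by (auto simp: bipolar_metric_def)
  have key: "Q * d (F e) (F f) ^ \<rho> \<le> \<pi> * (\<Sum>u=0..\<sigma>. W u * d e f ^ u)" if e: "e \<in> E" and f: "f \<in> P" for e f
  proof -
    have Fe: "F e \<in> E" and Ff: "F f \<in> P" using FE FP e f by auto
    have "Q * d (F e) (F f) ^ \<rho> \<le> q \<rho> (F e) (F f) * d (F e) (F f) ^ \<rho>"
      using Ql Fe Ff dnn[OF Fe Ff] by (intro mult_right_mono) auto
    also have "\<dots> \<le> (\<Sum>u=0..\<sigma>. q u (F e) (F f) * d (F e) (F f) ^ u)"
      by (rule member_le_sum[where f="\<lambda>u. q u (F e) (F f) * d (F e) (F f) ^ u"])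
        (use rho qnn Fe Ff dnn[OF Fe Ff] in auto)
    also have "\<dots> \<le> \<pi> * (\<Sum>u=0..\<sigma>. q u e f * d e f ^ u)" by (rule contr[OF e f])
    also have "\<dots> \<le> \<pi> * (\<Sum>u=0..\<sigma>. W u * d e f ^ u)"
      using pi dnn[OF e f] qW e f
      by (intro mult_left_mono sum_mono mult_right_mono) auto
    finally show ?thesis .
  qed
  show ?thesis
    unfolding bipolar_continuous_def
  proof (intro conjI allI impI)
    fix u v assume a: "(\<forall>n. u n \<in> E) \<and> v \<in> P \<and> (\<lambda>n. d (u n) v) \<longlonglongrightarrow> 0"
    show "(\<lambda>n. d (F (u n)) (F v)) \<longlonglongrightarrow> 0"
      by (rule aux_lim[where Q=Q and r=\<rho> and c=\<pi> and s=\<sigma> and W=W and t="\<lambda>n. d (u n) v"])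
        (use a key dnn FE FP W0 Q rho in \<open>auto simp: image_subset_iff\<close>)
  next
    fix u v assume a: "(\<forall>n. u n \<in> P) \<and> v \<in> E \<and> (\<lambda>n. d v (u n)) \<longlonglongrightarrow> 0"
    show "(\<lambda>n. d (F v) (F (u n))) \<longlonglongrightarrow> 0"
      by (rule aux_lim[where Q=Q and r=\<rho> and c=\<pi> and s=\<sigma> and W=W and t="\<lambda>n. d v (u n)"])
        (use a key dnn FE FP W0 Q rho in \<open>auto simp: image_subset_iff\<close>)
  qed
qed

end
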